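(* Assume (L). Let $\beta\in(0,1/2)$ and let $\nu,\psi$ satisfy $0<\nu\le \frac23(\frac12-\beta)$ and $0<\psi\le\frac{1/2-\beta}{3/2-\beta}$. Let $x\in\mathcal N_\nu$ and let $\tilde H$ be a symmetric matrix with $(1-\psi)H(x)\preceq\tilde H\preceq(1+\psi)H(x)$, and put $p=-\tilde H^{-1}\nabla f(x)$. Then $$f(x+p)\le f(x)+\beta\nabla f(x)^\top p,$$ i.e., the Armijo condition holds with unit stepsize, so in the Algorithm (if $x_t=x$ and $\tilde H_t=\tilde H$) the backtracking line search returns $\mu_t=1$.
   Context: $f:\mathbb{R}^d\to\mathbb{R}$ is twice continuously differentiable with Hessian $H(x)=\nabla^2 f(x)$ satisfying $\lambda_{\min} I\preceq H(x)\preceq \lambda_{\max} I$ for all $x$, where $0<\lambda_{\min}\le\lambda_{\max}$; $x^\star$ is the unique minimizer of $f$ and $H^\star=H(x^\star)$. $\|\cdot\|$ is the Euclidean/spectral norm; $\|v\|_A=\sqrt{v^\top Av}$ for $A\succeq 0$. Lipschitz Hessian assumption (L): $\|H(x)-H(y)\|\le L\|x-y\|$ for all $x,y$. Neighborhood: $\mathcal N_\nu=\{x:\|x-x^\star\|_{H^\star}\le \nu\lambda_{\min}^{3/2}/L\}$. The Algorithm's line search: given direction $p_t$ with $\nabla f(x_t)^\top p_t<0$, $\mu_t=\rho^{j_t}$ with $\rho\in(0,1)$ and $j_t$ the smallest nonnegative integer such that $f(x_t+\mu_tp_t)\le f(x_t)+\mu_t\beta\nabla f(x_t)^\top p_t$.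 *)

theory Defs
  imports "HOL-Analysis.Analysis"
begin

definition loewner_le :: "real^'n^'n \<Rightarrow> real^'n^'n \<Rightarrow> bool" where
  "loewner_le A B \<longleftrightarrow> (\<forall>v. v \<bullet> (A *v v) \<le> v \<bullet> (B *v v))"

definition anorm :: "real^'n^'n \<Rightarrow> real^'n \<Rightarrow> real" where
  "anorm A v = sqrt (v \<bullet> (A *v v))"

definition spec_norm :: "real^'n^'n \<Rightarrow> real" where
  "spec_norm A = onorm (\<lambda>v. A *v v)"

end

theory Submission
  imports Defs
begin

lemma d1:
  assumes grad: "\<And>y. (f has_derivative (\<lambda>h. g y \<bullet> h)) (at y)"
  shows "((\<lambda>t. f (x + t *\<^sub>R p)) has_real_derivative (g (x + t *\<^sub>R p) \<bullet> p)) (at t)"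
proof -
  have "((\<lambda>t. x + t *\<^sub>R p) has_derivative (\<lambda>s. s *\<^sub>R p)) (at t)"
    by (auto intro!: derivative_eq_intros)
  from has_derivative_compose[OF this grad]
  have "((\<lambda>t. f (x + t *\<^sub>R p)) has_derivative (\<lambda>s. g (x + t *\<^sub>R p) \<bullet> (s *\<^sub>R p))) (at t)" .
  then show ?thesis unfolding has_field_derivative_def
    by (rule has_derivative_eq_rhs) (auto simp: fun_eq_iff)
qed

lemma d2:
  fixes g :: "real^'n \<Rightarrow> real^'n"
  assumes hess: "\<And>y. (g has_derivative (\<lambda>h. H y *v h)) (at y)"
  shows "((\<lambda>t. g (x + t *\<^sub>R p) \<bullet> q) has_real_derivative ((H (x + t *\<^sub>R p) *v p) \<bullet> q)) (at t)"
proof -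
  have "((\<lambda>t. x + t *\<^sub>R p) has_derivative (\<lambda>s. s *\<^sub>R p)) (at t)"
    by (auto intro!: derivative_eq_intros)
  from has_derivative_compose[OF this hess]
  have "((\<lambda>t. g (x + t *\<^sub>R p)) has_derivative (\<lambda>s. H (x + t *\<^sub>R p) *v (s *\<^sub>R p))) (at t)" .
  then have "((\<lambda>t. g (x + t *\<^sub>R p) \<bullet> q) has_derivative (\<lambda>s. (H (x + t *\<^sub>R p) *v (s *\<^sub>R p)) \<bullet> q)) (at t)"
    by (auto intro!: derivative_eq_intros)
  then show ?thesis unfolding has_field_derivative_def
    by (rule has_derivative_eq_rhs) (auto simp: fun_eq_iff matrix_scaleR_vector_ac scaleR_matrix_vector_assoc[symmetric])
qed

lemma spec_bound:
  fixes A :: "real^'n^'n"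
  shows "\<bar>u \<bullet> (A *v v)\<bar> \<le> spec_norm A * norm u * norm v"
proof -
  have bl: "bounded_linear (\<lambda>v. A *v v)" by (simp add: matrix_vector_mul_bounded_linear)
  have "\<bar>u \<bullet> (A *v v)\<bar> \<le> norm u * norm (A *v v)" by (rule Cauchy_Schwarz_ineq2)
  also have "\<dots> \<le> norm u * (spec_norm A * norm v)"
    unfolding spec_norm_def by (rule mult_left_mono[OF onorm[OF bl]]) simp
  finally show ?thesis by (simp add: ac_simps)
qed

lemma inv_apply:
  fixes A :: "real^'n^'n"
  assumes pd: "\<And>v. v \<noteq> 0 \<Longrightarrow> 0 < v \<bullet> (A *v v)"
  shows "A *v (matrix_inv A *v y) = y"
proof -
  have "\<forall>x. A *v x = 0 \<longrightarrow> x = 0" using pd by force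
  then have "\<exists>B. B ** A = mat 1" using matrix_left_invertible_ker by blast
  then have "invertible A" using invertible_left_inverse by blast
  then have "\<exists>A'. A ** A' = mat 1 \<and> A' ** A = mat 1" unfolding invertible_def .
  then have "A ** matrix_inv A = mat 1 \<and> matrix_inv A ** A = mat 1"
    unfolding matrix_inv_def by (rule someI_ex)
  then show ?thesis by (metis matrix_vector_mul_assoc matrix_vector_mul_lid)
qed

lemma cs_form:
  fixes A :: "real^'n^'n"
  assumes sym: "\<And>u v. u \<bullet> (A *v v) = v \<bullet> (A *v u)"
    and psd: "\<And>v. 0 \<le> v \<bullet> (A *v v)"
  shows "(u \<bullet> (A *v v))^2 \<le> (u \<bullet> (A *v u)) * (v \<bullet> (A *v v))"
proof -
  define a where "a = u \<bullet> (A *v u)"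
  define b where "b = u \<bullet> (A *v v)"
  define c where "c = v \<bullet> (A *v v)"
  have q: "0 \<le> a + 2 * s * b + s^2 * c" for s
  proof -
    have "0 \<le> (u + s *\<^sub>R v) \<bullet> (A *v (u + s *\<^sub>R v))" by (rule psd)
    also have "\<dots> = a + s * b + s * (v \<bullet> (A *v u)) + s^2 * c"
      by (simp add: a_def b_def c_def matrix_vector_right_distrib matrix_scaleR_vector_ac
          scaleR_matrix_vector_assoc[symmetric] inner_add_left inner_add_right power2_eq_square algebra_simps)
    finally show ?thesis using sym[of v u] by (simp add: b_def)
  qed
  show ?thesis
  proof (cases "c = 0")
    case True
    have "b = 0"
    proof (rule ccontr)
      assume "b \<noteq> 0"
      have "0 \<le> a + 2 * (-(a+1)/(2*b)) * b" using q[of "-(a+1)/(2*b)"] True by simp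
      with \<open>b \<noteq> 0\<close> show False by (simp add: field_simps)
    qed
    then show ?thesis using True by (simp add: b_def c_def[symmetric])
  next
    case False
    then have cpos: "0 < c" using psd[of v] by (simp add: c_def)
    have "0 \<le> a + 2 * (-b/c) * b + (-b/c)^2 * c" by (rule q)
    then have "0 \<le> a - b^2 / c" using cpos by (simp add: field_simps power2_eq_square)
    then have "b^2 \<le> a * c" using cpos by (simp add: field_simps)
    then show ?thesis by (simp add: a_def b_def c_def)
  qed
qed

lemma second_diff:
  fixes f :: "real^'n \<Rightarrow> real" and g :: "real^'n \<Rightarrow> real^'n" and H :: "real^'n \<Rightarrow> real^'n^'n"
  assumes grad: "\<And>y. (f has_derivative (\<lambda>h. g y \<bullet> h)) (at y)"
    and hess: "\<And>y. (g has_derivative (\<lambda>h. H y *v h)) (at y)"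
    and lipschitz: "\<And>y z. spec_norm (H y - H z) \<le> L * norm (y - z)"
    and t: "0 < t"
  shows "\<exists>c. f (y + t *\<^sub>R u + t *\<^sub>R v) - f (y + t *\<^sub>R u) - f (y + t *\<^sub>R v) + f y = t^2 * c
           \<and> \<bar>c - (H y *v v) \<bullet> u\<bar> \<le> t * (\<bar>L\<bar> * (norm u + norm v) * norm u * norm v)"
proof -
  define \<phi> where "\<phi> s = f ((y + t *\<^sub>R v) + s *\<^sub>R u) - f (y + s *\<^sub>R u)" for s
  have "\<exists>z>0. z < t \<and> \<phi> t - \<phi> 0 = (t - 0) * (g ((y + t *\<^sub>R v) + z *\<^sub>R u) \<bullet> u - g (y + z *\<^sub>R u) \<bullet> u)"
    unfolding \<phi>_def
    by (rule MVT2[OF t]) (intro DERIV_diff d1 grad)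
  then obtain \<sigma> where \<sigma>: "0 < \<sigma>" "\<sigma> < t"
    and e1: "\<phi> t - \<phi> 0 = t * (g ((y + t *\<^sub>R v) + \<sigma> *\<^sub>R u) \<bullet> u - g (y + \<sigma> *\<^sub>R u) \<bullet> u)" by auto
  have "\<exists>z>0. z < t \<and> g ((y + \<sigma> *\<^sub>R u) + t *\<^sub>R v) \<bullet> u - g ((y + \<sigma> *\<^sub>R u) + 0 *\<^sub>R v) \<bullet> u
          = (t - 0) * ((H ((y + \<sigma> *\<^sub>R u) + z *\<^sub>R v) *v v) \<bullet> u)"
    by (rule MVT2[OF t]) (rule d2[OF hess])
  then obtain \<tau> where \<tau>: "0 < \<tau>" "\<tau> < t"
    and e2: "g ((y + \<sigma> *\<^sub>R u) + t *\<^sub>R v) \<bullet> u - g ((y + \<sigma> *\<^sub>R u) + 0 *\<^sub>R v) \<bullet> u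
          = t * ((H ((y + \<sigma> *\<^sub>R u) + \<tau> *\<^sub>R v) *v v) \<bullet> u)" by auto
  define \<zeta> where "\<zeta> = (y + \<sigma> *\<^sub>R u) + \<tau> *\<^sub>R v"
  have "(y + t *\<^sub>R v) + \<sigma> *\<^sub>R u = (y + \<sigma> *\<^sub>R u) + t *\<^sub>R v" by (simp add: algebra_simps)
  with e1 e2 have e: "\<phi> t - \<phi> 0 = t^2 * ((H \<zeta> *v v) \<bullet> u)"
    by (simp add: \<zeta>_def power2_eq_square)
  have lhs: "\<phi> t - \<phi> 0 = f (y + t *\<^sub>R u + t *\<^sub>R v) - f (y + t *\<^sub>R u) - f (y + t *\<^sub>R v) + f y"
    by (simp add: \<phi>_def algebra_simps)
  have "norm (\<zeta> - y) \<le> t * (norm u + norm v)"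
  proof -
    have "norm (\<zeta> - y) = norm (\<sigma> *\<^sub>R u + \<tau> *\<^sub>R v)" by (simp add: \<zeta>_def)
    also have "\<dots> \<le> \<sigma> * norm u + \<tau> * norm v"
      using \<sigma> \<tau> by (metis (no_types) abs_of_pos norm_scaleR norm_triangle_ineq)
    also have "\<dots> \<le> t * norm u + t * norm v"
      using \<sigma> \<tau> by (intro add_mono mult_right_mono) auto
    finally show ?thesis by (simp add: algebra_simps)
  qed
  have "\<bar>(H \<zeta> *v v) \<bullet> u - (H y *v v) \<bullet> u\<bar> = \<bar>u \<bullet> ((H \<zeta> - H y) *v v)\<bar>"
    by (simp add: matrix_vector_mult_diff_rdistrib inner_diff_right inner_commute)
  also have "\<dots> \<le> spec_norm (H \<zeta> - H y) * norm u * norm v" by (rule spec_bound)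
  also have "\<dots> \<le> (\<bar>L\<bar> * norm (\<zeta> - y)) * norm u * norm v"
    using lipschitz[of \<zeta> y] abs_ge_self[of L] mult_right_mono[of L "\<bar>L\<bar>" "norm (\<zeta> - y)"]
    by (intro mult_right_mono) auto
  also have "\<dots> \<le> (\<bar>L\<bar> * (t * (norm u + norm v))) * norm u * norm v"
    using \<open>norm (\<zeta> - y) \<le> _\<close> by (intro mult_right_mono mult_left_mono) auto
  finally have "\<bar>(H \<zeta> *v v) \<bullet> u - (H y *v v) \<bullet> u\<bar> \<le> t * (\<bar>L\<bar> * (norm u + norm v) * norm u * norm v)"
    by (simp add: ac_simps)
  then show ?thesis using e lhs by metis
qed

lemma hess_sym:
  fixes f :: "real^'n \<Rightarrow> real" and g :: "real^'n \<Rightarrow> real^'n" and H :: "real^'n \<Rightarrow> real^'n^'n"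
  assumes grad: "\<And>y. (f has_derivative (\<lambda>h. g y \<bullet> h)) (at y)"
    and hess: "\<And>y. (g has_derivative (\<lambda>h. H y *v h)) (at y)"
    and lipschitz: "\<And>y z. spec_norm (H y - H z) \<le> L * norm (y - z)"
  shows "u \<bullet> (H y *v v) = v \<bullet> (H y *v u)"
proof -
  define C where "C = \<bar>L\<bar> * (norm u + norm v) * norm u * norm v"
  have C: "0 \<le> C" by (simp add: C_def)
  have b: "\<bar>(H y *v v) \<bullet> u - (H y *v u) \<bullet> v\<bar> \<le> 2 * (t * C)" if t: "0 < t" for t
  proof -
    obtain c1 where c1: "f (y + t *\<^sub>R u + t *\<^sub>R v) - f (y + t *\<^sub>R u) - f (y + t *\<^sub>R v) + f y = t^2 * c1"
      "\<bar>c1 - (H y *v v) \<bullet> u\<bar> \<le> t * C"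
      using second_diff[OF grad hess lipschitz t, of y u v] unfolding C_def by blast
    obtain c2 where c2: "f (y + t *\<^sub>R v + t *\<^sub>R u) - f (y + t *\<^sub>R v) - f (y + t *\<^sub>R u) + f y = t^2 * c2"
      "\<bar>c2 - (H y *v u) \<bullet> v\<bar> \<le> t * C"
      using second_diff[OF grad hess lipschitz t, of y v u] unfolding C_def by (auto simp: ac_simps)
    have "y + t *\<^sub>R v + t *\<^sub>R u = y + t *\<^sub>R u + t *\<^sub>R v" by (simp add: algebra_simps)
    with c1(1) c2(1) have "t^2 * c1 = t^2 * c2" by (simp add: algebra_simps)
    with t have "c1 = c2" by simp
    with c1(2) c2(2) show ?thesis by (simp add: abs_le_iff)
  qed
  have "\<bar>(H y *v v) \<bullet> u - (H y *v u) \<bullet> v\<bar> \<le> 0"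
  proof (rule field_le_epsilon)
    fix e :: real assume e: "0 < e"
    define t where "t = e / (2 * C + 1)"
    have t: "0 < t" using e C by (simp add: t_def)
    have "2 * (t * C) \<le> e" using e C by (simp add: t_def field_simps)
    with b[OF t] show "\<bar>(H y *v v) \<bullet> u - (H y *v u) \<bullet> v\<bar> \<le> 0 + e" by simp
  qed
  then show ?thesis by (simp add: inner_commute)
qed

lemma taylor_upper:
  fixes f :: "real^'n \<Rightarrow> real" and g :: "real^'n \<Rightarrow> real^'n" and H :: "real^'n \<Rightarrow> real^'n^'n"
  assumes grad: "\<And>y. (f has_derivative (\<lambda>h. g y \<bullet> h)) (at y)"
    and hess: "\<And>y. (g has_derivative (\<lambda>h. H y *v h)) (at y)"
    and lipschitz: "\<And>y z. spec_norm (H y - H z) \<le> L * norm (y - z)"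
  shows "f (x + p) \<le> f x + g x \<bullet> p + (p \<bullet> (H x *v p)) / 2 + L * norm p ^ 3 / 6"
proof -
  define Q where "Q = (H x *v p) \<bullet> p"
  define P where "P = norm p"
  define k1 where "k1 t = g (x + t *\<^sub>R p) \<bullet> p - g x \<bullet> p - t * Q - L * t^2 * P^3 / 2" for t
  define k0 where "k0 t = f (x + t *\<^sub>R p) - f x - t * (g x \<bullet> p) - t^2 * Q / 2 - L * t^3 * P^3 / 6" for t
  have dk1: "(k1 has_real_derivative ((H (x + t *\<^sub>R p) *v p) \<bullet> p - Q - L * t * P^3)) (at t)" for t
    unfolding k1_def
    by (auto intro!: derivative_eq_intros d2[OF hess] simp: power2_eq_square)
  have dk0: "(k0 has_real_derivative k1 t) (at t)" for t
    unfolding k0_def k1_def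
    by (auto intro!: derivative_eq_intros d1[OF grad] simp: power2_eq_square power3_eq_cube field_simps)
  have k1le: "k1 t \<le> 0" if t: "0 \<le> t" for t
  proof -
    have "k1 t \<le> k1 0"
    proof (rule DERIV_nonpos_imp_nonincreasing[OF t])
      fix s assume s: "0 \<le> s" "s \<le> t"
      have "(H (x + s *\<^sub>R p) *v p) \<bullet> p - Q = p \<bullet> ((H (x + s *\<^sub>R p) - H x) *v p)"
        by (simp add: Q_def matrix_vector_mult_diff_rdistrib inner_diff_right inner_commute)
      also have "\<dots> \<le> spec_norm (H (x + s *\<^sub>R p) - H x) * P * P"
        using spec_bound[of p "H (x + s *\<^sub>R p) - H x" p] by (simp add: P_def)
      also have "\<dots> \<le> (L * (s * P)) * P * P"
        using lipschitz[of "x + s *\<^sub>R p" x] s by (intro mult_right_mono) (auto simp: P_def)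
      finally have "(H (x + s *\<^sub>R p) *v p) \<bullet> p - Q - L * s * P^3 \<le> 0"
        by (simp add: power3_eq_cube algebra_simps)
      then show "\<exists>y. (k1 has_real_derivative y) (at s) \<and> y \<le> 0" using dk1 by blast
    qed
    also have "k1 0 = 0" by (simp add: k1_def)
    finally show ?thesis .
  qed
  have "k0 1 \<le> k0 0"
    by (rule DERIV_nonpos_imp_nonincreasing) (use dk0 k1le in auto)
  then show ?thesis
    by (simp add: k0_def Q_def P_def inner_commute)
qed

lemma arith_final:
  fixes c k \<nu> m L P \<delta> r a S2 Qx X :: real
  assumes c: "0 < c" "c < 1/2"
    and k: "0 < k" "k \<le> 1" "1 \<le> k * (1 + c)"
    and nu: "0 < \<nu>" "\<nu> \<le> 2/3 * c"
    and m: "0 < m"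
    and nn: "0 \<le> L" "0 \<le> P" "0 \<le> \<delta>" "0 \<le> r" "0 \<le> a" "0 \<le> S2" "0 \<le> X"
    and h1: "k * m^2 * P^2 \<le> a"
    and h2: "k * Qx \<le> a"
    and h3: "a \<le> X + L * \<delta>^2 * P"
    and h3': "X^2 \<le> S2 * r^2"
    and h4: "S2 \<le> Qx + L * \<delta> * P^2"
    and h5: "m^2 * \<delta>^2 \<le> r^2"
    and h6: "L * r \<le> \<nu> * m^2 * m"
  shows "- a + Qx / 2 + L * P^3 / 6 \<le> - (1/2 - c) * a"
proof -
  define A where "A = sqrt a"
  define q where "q = sqrt k"
  have A: "0 \<le> A" "A^2 = a" using nn by (auto simp: A_def)
  have q: "0 < q" "q^2 = k" using k by (auto simp: q_def)
  have s1: "m * \<delta> \<le> r"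
    using power2_le_imp_le[of "m * \<delta>" r] h5 nn m by (simp add: power_mult_distrib)
  have s2: "L * \<delta> \<le> \<nu> * m^2"
  proof -
    have "m * (L * \<delta>) = L * (m * \<delta>)" by simp
    also have "\<dots> \<le> L * r" using s1 nn by (intro mult_left_mono) auto
    also have "\<dots> \<le> m * (\<nu> * m^2)" using h6 by (simp add: ac_simps)
    finally show ?thesis using m by simp
  qed
  have s3: "L * \<delta>^2 * P \<le> \<nu> * m * r * P"
  proof -
    have "L * \<delta>^2 = (L * \<delta>) * \<delta>" by (simp add: power2_eq_square)
    also have "\<dots> \<le> (\<nu> * m^2) * \<delta>" using s2 nn by (intro mult_right_mono) auto
    also have "\<dots> = \<nu> * m * (m * \<delta>)" by (simp add: power2_eq_square)
    also have "\<dots> \<le> \<nu> * m * r" using s1 nu m by (intro mult_left_mono) auto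
    finally show ?thesis using nn by (intro mult_right_mono) auto
  qed
  have s4: "k * S2 \<le> (1 + \<nu>) * a"
  proof -
    have "k * S2 \<le> k * (Qx + L * \<delta> * P^2)" using h4 k by (intro mult_left_mono) auto
    also have "\<dots> = k * Qx + (L * \<delta>) * (k * P^2)" by (simp add: algebra_simps)
    also have "\<dots> \<le> a + (\<nu> * m^2) * (k * P^2)" using h2 s2 k nn by (intro add_mono mult_right_mono) auto
    also have "\<dots> = a + \<nu> * (k * m^2 * P^2)" by (simp add: algebra_simps)
    also have "\<dots> \<le> a + \<nu> * a" using h1 nu by (intro add_left_mono mult_left_mono) auto
    finally show ?thesis by (simp add: algebra_simps)
  qed
  have s5: "m * q * P \<le> A"
    using power2_le_imp_le[of "m * q * P" A] h1 q A m nn by (simp add: power_mult_distrib mult.commute mult.left_commute)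
  have s6: "q * sqrt S2 \<le> (1 + \<nu>/2) * A"
  proof (rule power2_le_imp_le)
    have "(q * sqrt S2)^2 = k * S2" using q nn by (simp add: power_mult_distrib)
    also have "\<dots> \<le> (1 + \<nu>) * a" by (rule s4)
    also have "\<dots> \<le> (1 + \<nu>/2)^2 * a" using nn by (intro mult_right_mono) (auto simp: power2_eq_square algebra_simps)
    also have "\<dots> = ((1 + \<nu>/2) * A)^2" using A by (simp add: power_mult_distrib)
    finally show "(q * sqrt S2)^2 \<le> ((1 + \<nu>/2) * A)^2" .
    show "0 \<le> (1 + \<nu>/2) * A" using nu A by simp
  qed
  have s7: "X \<le> sqrt S2 * r"
    using power2_le_imp_le[of X "sqrt S2 * r"] h3' nn by (simp add: power_mult_distrib)
  have s8: "A * q \<le> 3/2 * r"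
  proof (cases "A = 0")
    case True then show ?thesis using nn q by simp
  next
    case False
    then have Apos: "0 < A" using A by simp
    have "A * (A * q) = a * q" using A by (simp add: power2_eq_square)
    also have "\<dots> \<le> (X + L * \<delta>^2 * P) * q" using h3 q by (intro mult_right_mono) auto
    also have "\<dots> \<le> (sqrt S2 * r + \<nu> * m * r * P) * q" using add_mono[OF s7 s3] q by (intro mult_right_mono) auto
    also have "\<dots> = r * (q * sqrt S2) + \<nu> * r * (m * q * P)" by (simp add: algebra_simps)
    also have "\<dots> \<le> r * ((1 + \<nu>/2) * A) + \<nu> * r * A"
      using s5 s6 nn nu by (intro add_mono mult_left_mono) auto
    also have "\<dots> = A * ((1 + 3/2 * \<nu>) * r)" by (simp add: algebra_simps)
    finally have "A * q \<le> (1 + 3/2 * \<nu>) * r" using Apos by simp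
    also have "\<dots> \<le> 3/2 * r" using nu c nn by (intro mult_right_mono) auto
    finally show ?thesis .
  qed
  have s9: "L * k * P \<le> 3/2 * \<nu> * m^2"
  proof -
    have "m * (L * k * P) = L * q * (m * q * P)" using q by (simp add: power2_eq_square algebra_simps)
    also have "\<dots> \<le> L * q * A" using s5 nn q by (intro mult_left_mono) auto
    also have "\<dots> = L * (A * q)" by simp
    also have "\<dots> \<le> L * (3/2 * r)" using s8 nn by (intro mult_left_mono) auto
    also have "\<dots> = 3/2 * (L * r)" by simp
    also have "\<dots> \<le> 3/2 * (\<nu> * m^2 * m)" using h6 by simp
    also have "\<dots> = m * (3/2 * \<nu> * m^2)" by simp
    finally show ?thesis using m by simp
  qed
  have s10: "L * P^3 * k^2 \<le> c * a"
  proof -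
    have "L * P^3 * k^2 = (L * k * P) * (k * P^2)" by (simp add: power2_eq_square power3_eq_cube)
    also have "\<dots> \<le> (3/2 * \<nu> * m^2) * (k * P^2)" using s9 k nn by (intro mult_right_mono) auto
    also have "\<dots> = 3/2 * \<nu> * (k * m^2 * P^2)" by simp
    also have "\<dots> \<le> 3/2 * \<nu> * a" using h1 nu by (intro mult_left_mono) auto
    also have "\<dots> \<le> c * a" using nu nn by (intro mult_right_mono) auto
    finally show ?thesis .
  qed
  have poly: "3 * k + c \<le> 3 * k^2 + 6 * c * k^2"
  proof -
    have k23: "2/3 \<le> k"
    proof -
      have "k * (1 + c) \<le> k * (3/2)" using k c by (intro mult_left_mono) auto
      then have "1 \<le> k * (3/2)" using k by linarith
      then show ?thesis by simp
    qed
    have "k * (1 + 2*c) - 1 \<ge> k * c" using k by (simp add: algebra_simps)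
    then have "3 * k * (k * (1 + 2*c) - 1) \<ge> 3 * k * (k * c)" using k by (intro mult_left_mono) auto
    moreover have "c * (3 * k^2 - 1) \<ge> 0"
    proof -
      have "k^2 \<ge> (2/3)^2" using k23 by (intro power_mono) auto
      then have "4/9 \<le> k^2" by (simp add: power2_eq_square)
      then show ?thesis using c by (intro mult_nonneg_nonneg) auto
    qed
    ultimately show ?thesis by (simp add: power2_eq_square algebra_simps)
  qed
  have "k^2 * (- a + Qx / 2 + L * P^3 / 6) \<le> k^2 * (- (1/2 - c) * a)"
  proof -
    have "k^2 * (- a + Qx / 2 + L * P^3 / 6) = - (k^2 * a) + k * (k * Qx) / 2 + L * P^3 * k^2 / 6"
      by (simp add: power2_eq_square algebra_simps)
    also have "\<dots> \<le> - (k^2 * a) + k * a / 2 + c * a / 6"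
      using h2 s10 k by (intro add_mono) (auto intro!: mult_left_mono divide_right_mono)
    also have "\<dots> \<le> k^2 * (- (1/2 - c) * a)"
    proof -
      have "a * (3 * k + c) \<le> a * (3 * k^2 + 6 * c * k^2)" using poly nn by (intro mult_left_mono) auto
      then show ?thesis by (simp add: algebra_simps power2_eq_square)
    qed
    finally show ?thesis .
  qed
  then show ?thesis using k by (simp add: mult_le_cancel_left)
qed

theorem mainTheorem5:
  fixes f :: "real^'n \<Rightarrow> real"
    and g :: "real^'n \<Rightarrow> real^'n"
    and H :: "real^'n \<Rightarrow> real^'n^'n"
    and xs x :: "real^'n"
    and Ht :: "real^'n^'n"
    and lmin lmax L \<beta> \<nu> \<psi> :: real
  assumes grad: "\<And>y. (f has_derivative (\<lambda>h. g y \<bullet> h)) (at y)"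
    and hess: "\<And>y. (g has_derivative (\<lambda>h. H y *v h)) (at y)"
    and H_cont: "continuous_on UNIV H"
    and lmin_pos: "0 < lmin" and lmin_le: "lmin \<le> lmax"
    and H_bounds: "\<And>y. loewner_le (lmin *\<^sub>R mat 1) (H y) \<and> loewner_le (H y) (lmax *\<^sub>R mat 1)"
    and xs_min: "\<And>y. f xs \<le> f y"
    and lipschitz: "\<And>y z. spec_norm (H y - H z) \<le> L * norm (y - z)"
    and beta: "0 < \<beta>" "\<beta> < 1/2"
    and nu: "0 < \<nu>" "\<nu> \<le> 2/3 * (1/2 - \<beta>)"
    and psi: "0 < \<psi>" "\<psi> \<le> (1/2 - \<beta>) / (3/2 - \<beta>)"
    and x_nbhd: "L * anorm (H xs) (x - xs) \<le> \<nu> * lmin powr (3/2)"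
    and Ht_sym: "transpose Ht = Ht"
    and Ht_bounds: "loewner_le ((1 - \<psi>) *\<^sub>R H x) Ht" "loewner_le Ht ((1 + \<psi>) *\<^sub>R H x)"
  shows "f (x + (- (matrix_inv Ht *v g x))) \<le> f x + \<beta> * (g x \<bullet> (- (matrix_inv Ht *v g x)))"
proof -
  define c where "c = 1/2 - \<beta>"
  define k where "k = 1 - \<psi>"
  define G where "G = g x"
  define p where "p = - (matrix_inv Ht *v G)"
  define d where "d = x - xs"
  define m where "m = sqrt lmin"
  define r where "r = anorm (H xs) d"
  define a where "a = p \<bullet> (Ht *v p)"
  define S2 where "S2 = p \<bullet> (H xs *v p)"
  define Qx where "Qx = p \<bullet> (H x *v p)"
  have c: "0 < c" "c < 1/2" using beta by (auto simp: c_def)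
  have psi': "\<psi> \<le> c / (1 + c)" using psi by (simp add: c_def)
  have k: "0 < k" "k \<le> 1" "1 \<le> k * (1 + c)"
  proof -
    have "\<psi> * (1 + c) \<le> c" using psi' c by (simp add: field_simps)
    then show "1 \<le> k * (1 + c)" by (simp add: k_def algebra_simps)
    have "c / (1 + c) < 1" using c by simp
    then show "0 < k" using psi' by (simp add: k_def)
    show "k \<le> 1" using psi by (simp add: k_def)
  qed
  have nu': "0 < \<nu>" "\<nu> \<le> 2/3 * c" using nu by (auto simp: c_def)
  have m: "0 < m" "m^2 = lmin" using lmin_pos by (auto simp: m_def)
  have lo_min: "lmin * (v \<bullet> v) \<le> v \<bullet> (H y *v v)" for y v
    using H_bounds[of y] unfolding loewner_le_def
    by (auto simp: scaleR_matrix_vector_assoc[symmetric])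
  have lo_Ht: "k * (v \<bullet> (H x *v v)) \<le> v \<bullet> (Ht *v v)" for v
    using Ht_bounds(1) unfolding loewner_le_def
    by (auto simp: k_def scaleR_matrix_vector_assoc[symmetric])
  have Ht_low: "k * lmin * (norm v)^2 \<le> v \<bullet> (Ht *v v)" for v
  proof -
    have "k * lmin * (norm v)^2 = k * (lmin * (v \<bullet> v))" by (simp add: dot_square_norm)
    also have "\<dots> \<le> k * (v \<bullet> (H x *v v))" using lo_min k by (intro mult_left_mono) auto
    also have "\<dots> \<le> v \<bullet> (Ht *v v)" by (rule lo_Ht)
    finally show ?thesis .
  qed
  have Ht_pd: "0 < v \<bullet> (Ht *v v)" if "v \<noteq> 0" for v
  proof -
    have "0 < k * lmin * (norm v)^2" using k lmin_pos that by simp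
    then show ?thesis using Ht_low[of v] by linarith
  qed
  have Htp: "Ht *v p = - G"
    by (simp add: p_def vec.neg inv_apply[OF Ht_pd])
  have a_eq: "a = - (G \<bullet> p)" by (simp add: a_def Htp inner_commute)
  have L0: "0 \<le> L"
  proof -
    obtain i :: 'n where True by simp
    have "0 \<le> spec_norm (H (axis i 1) - H 0)"
      unfolding spec_norm_def by (rule onorm_pos_le) (simp add: matrix_vector_mul_bounded_linear)
    also have "\<dots> \<le> L * norm (axis i (1::real) - 0)" by (rule lipschitz)
    finally show ?thesis by simp
  qed
  have h1: "k * m^2 * (norm p)^2 \<le> a" using Ht_low[of p] m by (simp add: a_def)
  have h2: "k * Qx \<le> a" using lo_Ht[of p] by (simp add: a_def Qx_def)
  have a0: "0 \<le> a" using h1 k m by (smt (verit) mult_nonneg_nonneg zero_le_power2)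
  have taylor: "f (x + p) \<le> f x + G \<bullet> p + Qx / 2 + L * norm p ^ 3 / 6"
    using taylor_upper[OF grad hess lipschitz, of x p] by (simp add: G_def Qx_def)
  have gxs: "g xs = 0"
  proof -
    have "(\<lambda>h. g xs \<bullet> h) = (\<lambda>v. 0)"
      by (rule differential_zero_maxmin[of xs UNIV f]) (use grad xs_min in auto)
    then have "g xs \<bullet> g xs = 0" by meson
    then show ?thesis by simp
  qed
  obtain \<tau> where \<tau>: "0 < \<tau>" "\<tau> < 1"
    and mvt: "g (xs + 1 *\<^sub>R d) \<bullet> p - g (xs + 0 *\<^sub>R d) \<bullet> p = (1 - 0) * ((H (xs + \<tau> *\<^sub>R d) *v d) \<bullet> p)"
    using MVT2[of 0 1 "\<lambda>t. g (xs + t *\<^sub>R d) \<bullet> p", OF _ d2[OF hess]] by auto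
  define \<zeta> where "\<zeta> = xs + \<tau> *\<^sub>R d"
  have Gp: "G \<bullet> p = (H \<zeta> *v d) \<bullet> p" using mvt by (simp add: G_def d_def gxs \<zeta>_def)
  define X where "X = \<bar>p \<bullet> (H xs *v d)\<bar>"
  have h3: "a \<le> X + L * (norm d)^2 * norm p"
  proof -
    have "\<bar>(H \<zeta> *v d) \<bullet> p - (H xs *v d) \<bullet> p\<bar> = \<bar>p \<bullet> ((H \<zeta> - H xs) *v d)\<bar>"
      by (simp add: matrix_vector_mult_diff_rdistrib inner_diff_right inner_commute)
    also have "\<dots> \<le> spec_norm (H \<zeta> - H xs) * norm p * norm d" by (rule spec_bound)
    also have "\<dots> \<le> (L * norm d) * norm p * norm d"
    proof -
      have "spec_norm (H \<zeta> - H xs) \<le> L * norm (\<zeta> - xs)" by (rule lipschitz)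
      also have "\<dots> = L * (\<tau> * norm d)" using \<tau> by (simp add: \<zeta>_def)
      also have "\<dots> \<le> L * norm d" using \<tau> L0 mult_right_mono[of \<tau> 1 "norm d"] by (intro mult_left_mono) auto
      finally show ?thesis by (intro mult_right_mono) auto
    qed
    finally have "\<bar>(H \<zeta> *v d) \<bullet> p - (H xs *v d) \<bullet> p\<bar> \<le> L * (norm d)^2 * norm p"
      by (simp add: power2_eq_square ac_simps)
    then show ?thesis using a_eq Gp by (simp add: X_def inner_commute abs_le_iff) linarith
  qed
  have sym: "\<And>u v. u \<bullet> (H xs *v v) = v \<bullet> (H xs *v u)"
    by (rule hess_sym[OF grad hess lipschitz])
  have psd: "\<And>v. 0 \<le> v \<bullet> (H xs *v v)"
  proof -
    fix v show "0 \<le> v \<bullet> (H xs *v v)" using lo_min[of v xs] lmin_pos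
      by (smt (verit) inner_ge_zero mult_nonneg_nonneg)
  qed
  have r2: "r^2 = d \<bullet> (H xs *v d)" using psd[of d] by (simp add: r_def anorm_def)
  have h3': "X^2 \<le> S2 * r^2"
    using cs_form[OF sym psd, of p d] by (simp add: X_def S2_def r2)
  have h4: "S2 \<le> Qx + L * norm d * (norm p)^2"
  proof -
    have "S2 - Qx = p \<bullet> ((H xs - H x) *v p)"
      by (simp add: S2_def Qx_def matrix_vector_mult_diff_rdistrib inner_diff_right)
    also have "\<dots> \<le> spec_norm (H xs - H x) * norm p * norm p"
      using spec_bound[of p "H xs - H x" p] by simp
    also have "\<dots> \<le> (L * norm d) * norm p * norm p"
      using lipschitz[of xs x] by (intro mult_right_mono) (auto simp: d_def norm_minus_commute)
    finally show ?thesis by (simp add: power2_eq_square ac_simps)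
  qed
  have h5: "m^2 * (norm d)^2 \<le> r^2"
    using lo_min[of d xs] m by (simp add: r2 dot_square_norm)
  have h6: "L * r \<le> \<nu> * m^2 * m"
  proof -
    have "lmin powr (3/2) = lmin * lmin powr (1/2)"
      using powr_add[of lmin 1 "1/2"] lmin_pos by simp
    also have "\<dots> = m^2 * m" using lmin_pos m by (simp add: powr_half_sqrt m_def)
    finally show ?thesis using x_nbhd by (simp add: r_def d_def ac_simps)
  qed
  have S20: "0 \<le> S2" using psd[of p] by (simp add: S2_def)
  have r0: "0 \<le> r" using psd[of d] by (simp add: r_def anorm_def)
  have fin: "- a + Qx / 2 + L * norm p ^ 3 / 6 \<le> - (1/2 - c) * a"
    by (rule arith_final[OF c k nu' m(1) L0 norm_ge_zero norm_ge_zero r0 a0 S20 _ h1 h2 h3 h3' h4 h5 h6])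
       (simp add: X_def)
  have "f (x + p) \<le> f x + \<beta> * (G \<bullet> p)"
    using taylor fin a_eq by (simp add: c_def algebra_simps)
  then show ?thesis by (simp add: p_def G_def)
qed

end
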